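(* Let $A$ be an additive poset, $a\in A$, and $n\ge1$ an integer. There is a bijection between chains $a=a_0<a_1<\cdots<a_n$ in $A$ of length $n$ starting at $a$ and sequences $b_1,\dots,b_n$ of $n$ pairwise independent nonzero elements of $A^a$. It sends the chain to the sequence $b_i=a_{i-1}+a_i$ ($i=1,\dots,n$), and its inverse sends $b_1,\dots,b_n$ to the chain with $a_0=a$ and $a_i=a+b_1+\cdots+b_i$ ($i=1,\dots,n$).
   Context: An additive poset is a pair $(A,\le)$ where $A$ is an abelian group and $\le$ is a partial order on $A$ such that for all $a,b,c\in A$: $(\ast)$ if $b\le a$ and $c\le a$ then $b+c\le a$; $(\ast\ast)$ if $a\le b$ and $a\le c$ then $a\le a+b+c$. Elements $a,b$ are independent if $a\le a+b$ (a symmetric relation). $A^a$ denotes the set of elements of $A$ independent from $a$. We write $x<y$ if $x\le y$ and $x\ne y$; a chain of length $n$ is a sequence $a_0<a_1<\cdots<a_n$. *)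

theory Defs
  imports Main
begin

definition additive_poset :: "('a::ab_group_add \<Rightarrow> 'a \<Rightarrow> bool) \<Rightarrow> bool" where
  "additive_poset le \<longleftrightarrow>
     (\<forall>x. le x x) \<and>
     (\<forall>x y. le x y \<and> le y x \<longrightarrow> x = y) \<and>
     (\<forall>x y z. le x y \<and> le y z \<longrightarrow> le x z) \<and>
     (\<forall>a b c. le b a \<and> le c a \<longrightarrow> le (b + c) a) \<and>
     (\<forall>a b c. le a b \<and> le a c \<longrightarrow> le a (a + b + c))"

definition ap_less :: "('a \<Rightarrow> 'a \<Rightarrow> bool) \<Rightarrow> 'a \<Rightarrow> 'a \<Rightarrow> bool" where
  "ap_less le x y \<longleftrightarrow> le x y \<and> x \<noteq> y"

definition independent :: "('a::ab_group_add \<Rightarrow> 'a \<Rightarrow> bool) \<Rightarrow> 'a \<Rightarrow> 'a \<Rightarrow> bool" where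
  "independent le x y \<longleftrightarrow> le x (x + y)"

definition chains_from :: "('a \<Rightarrow> 'a \<Rightarrow> bool) \<Rightarrow> 'a \<Rightarrow> nat \<Rightarrow> 'a list set" where
  "chains_from le a n = {cs. length cs = Suc n \<and> cs ! 0 = a \<and>
      (\<forall>i<n. ap_less le (cs ! i) (cs ! Suc i))}"

text \<open>Sequences b_1, ..., b_n (list [b_1,...,b_n]) of pairwise independent nonzero
  elements of A^a.\<close>
definition indep_seqs :: "('a::ab_group_add \<Rightarrow> 'a \<Rightarrow> bool) \<Rightarrow> 'a \<Rightarrow> nat \<Rightarrow> 'a list set" where
  "indep_seqs le a n = {bs. length bs = n \<and>
      (\<forall>i<n. bs ! i \<noteq> 0 \<and> independent le a (bs ! i)) \<and>
      (\<forall>i<n. \<forall>j<n. i \<noteq> j \<longrightarrow> independent le (bs ! i) (bs ! j))}"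

definition chain_to_seq :: "nat \<Rightarrow> 'a::ab_group_add list \<Rightarrow> 'a list" where
  "chain_to_seq n cs = map (\<lambda>i. cs ! i + cs ! Suc i) [0..<n]"

definition seq_to_chain :: "'a::ab_group_add \<Rightarrow> nat \<Rightarrow> 'a list \<Rightarrow> 'a list" where
  "seq_to_chain a n bs = map (\<lambda>i. a + sum_list (take i bs)) [0..<Suc n]"

end

theory Submission
  imports Defs
begin

lemma apD:
  assumes "additive_poset le"
  shows ap_refl: "le x x"
    and ap_antisym: "le x y \<Longrightarrow> le y x \<Longrightarrow> x = y"
    and ap_trans: "le x y \<Longrightarrow> le y z \<Longrightarrow> le x z"
    and ap_star: "le b c \<Longrightarrow> le d c \<Longrightarrow> le (b + d) c"
    and ap_star2: "le c b \<Longrightarrow> le c d \<Longrightarrow> le c (c + b + d)"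
  using assms unfolding additive_poset_def by blast+

lemma two0:
  fixes x :: "'a::ab_group_add" and le :: "'a \<Rightarrow> 'a \<Rightarrow> bool"
  assumes "additive_poset le" shows "x + x = 0"
proof -
  have h1: "le (x + x) x" using ap_star[OF assms] ap_refl[OF assms] by blast
  have "le (x + x + x) x" using ap_star[OF assms h1 ap_refl[OF assms]] .
  moreover have "le x (x + x + x)" using ap_star2[OF assms] ap_refl[OF assms] by blast
  ultimately have "x + x + x = x" using ap_antisym[OF assms] by blast
  then show ?thesis by (metis add_right_imp_eq add_0 add.assoc add.commute)
qed

lemma indep_sym:
  fixes x :: "'a::ab_group_add"
  assumes "additive_poset le" "le x (x + y)" shows "le y (y + x)"
proof -
  have "le (x + (x + y)) (x + y)" using ap_star[OF assms(1) assms(2) ap_refl[OF assms(1)]] .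
  moreover have "x + (x + y) = y" using two0[OF assms(1), of x] by (metis add.assoc add_0)
  ultimately show ?thesis by (simp add: add.commute)
qed

lemma indep_sum:
  fixes c :: "'a::ab_group_add"
  assumes "additive_poset le" "le c (c + x)" "le c (c + y)" shows "le c (c + (x + y))"
proof -
  have "le c (c + (c + x) + (c + y))" using ap_star2[OF assms] .
  moreover have "c + (c + x) + (c + y) = c + (x + y)"
    using two0[OF assms(1), of c] by (simp add: algebra_simps)
  ultimately show ?thesis by simp
qed

lemma chain_mono:
  assumes ap: "additive_poset le" and st: "\<forall>i<n. le (cs!i) (cs!Suc i)"
    and "i \<le> j" "j \<le> n"
  shows "le (cs!i) (cs!j)"
  using assms(3,4)
proof (induction j rule: dec_induct)
  case base then show ?case using ap_refl[OF ap] by blast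
next
  case (step k)
  have "k < n" using step by simp
  then have "le (cs!k) (cs!Suc k)" using st by blast
  then show ?case using step ap_trans[OF ap] by simp
qed

lemma telescope:
  fixes cs :: "'a::ab_group_add list" and le :: "'a \<Rightarrow> 'a \<Rightarrow> bool"
  assumes ap: "additive_poset le" and "i \<le> n"
  shows "cs!0 + sum_list (take i (chain_to_seq n cs)) = cs ! i"
  using assms(2)
proof (induction i)
  case 0 then show ?case by simp
next
  case (Suc i)
  have "take (Suc i) (chain_to_seq n cs) = take i (chain_to_seq n cs) @ [cs!i + cs!Suc i]"
    using Suc.prems by (simp add: chain_to_seq_def take_Suc_conv_app_nth)
  then have "cs!0 + sum_list (take (Suc i) (chain_to_seq n cs)) = cs!i + (cs!i + cs!Suc i)"
    using Suc by (simp add: add.assoc)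
  also have "\<dots> = cs ! Suc i" using two0[OF ap, of "cs!i"] by (metis add.assoc add_0)
  finally show ?case .
qed

lemma s2c_nth:
  fixes bs :: "'a::ab_group_add list"
  assumes "i \<le> n"
  shows "seq_to_chain a n bs ! i = a + sum_list (take i bs)"
  using assms unfolding seq_to_chain_def by (simp del: upt_Suc)

theorem lemma4p3:
  fixes le :: "'a::ab_group_add \<Rightarrow> 'a \<Rightarrow> bool" and a :: 'a and n :: nat
  assumes "additive_poset le" and "n \<ge> 1"
  shows "bij_betw (chain_to_seq n) (chains_from le a n) (indep_seqs le a n)
    \<and> (\<forall>bs\<in>indep_seqs le a n. seq_to_chain a n bs \<in> chains_from le a n
          \<and> chain_to_seq n (seq_to_chain a n bs) = bs)
    \<and> (\<forall>cs\<in>chains_from le a n. seq_to_chain a n (chain_to_seq n cs) = cs)"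
proof -
  note ap = assms(1)
  have L: "seq_to_chain a n (chain_to_seq n cs) = cs" if cs: "cs \<in> chains_from le a n" for cs
  proof (rule nth_equalityI)
    show "length (seq_to_chain a n (chain_to_seq n cs)) = length cs"
      using cs by (simp add: seq_to_chain_def chains_from_def)
    fix i assume "i < length (seq_to_chain a n (chain_to_seq n cs))"
    then have i: "i \<le> n" by (simp add: seq_to_chain_def)
    show "seq_to_chain a n (chain_to_seq n cs) ! i = cs ! i"
      using s2c_nth[OF i, of a "chain_to_seq n cs"] telescope[OF ap i, of cs] cs
      by (simp add: chains_from_def)
  qed
  have F: "chain_to_seq n cs \<in> indep_seqs le a n" if cs: "cs \<in> chains_from le a n" for cs
  proof -
    have len: "length cs = Suc n" and c0: "cs!0 = a"
      and lt: "\<forall>i<n. ap_less le (cs ! i) (cs ! Suc i)"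
      using cs by (auto simp: chains_from_def)
    have st: "\<forall>i<n. le (cs!i) (cs!Suc i)" using lt by (simp add: ap_less_def)
    have mono: "le (cs!i) (cs!j)" if "i \<le> j" "j \<le> n" for i j
      using chain_mono[OF ap st that] .
    have nth: "chain_to_seq n cs ! i = cs!i + cs!Suc i" if "i < n" for i
      using that by (simp add: chain_to_seq_def)
    have bi: "le (cs!i + cs!Suc i) (cs!Suc i)" if "i < n" for i
      using ap_star[OF ap] st that ap_refl[OF ap] by blast
    show ?thesis unfolding indep_seqs_def
    proof (intro CollectI conjI allI impI)
      show "length (chain_to_seq n cs) = n" by (simp add: chain_to_seq_def)
    next
      fix i assume i: "i < n"
      show "chain_to_seq n cs ! i \<noteq> 0"
      proof
        assume "chain_to_seq n cs ! i = 0"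
        then have "cs!i + cs!Suc i = 0" using nth i by simp
        then have "cs!i = cs!Suc i"
          using two0[OF ap, of "cs!i"] by (metis add_left_cancel)
        then show False using lt i by (simp add: ap_less_def)
      qed
      have "le a (a + cs!i + cs!Suc i)"
        using ap_star2[OF ap] mono[of 0 i] mono[of 0 "Suc i"] i c0 by simp
      then show "independent le a (chain_to_seq n cs ! i)"
        using nth i by (simp add: independent_def add.assoc)
    next
      fix i j assume i: "i < n" and j: "j < n" and ij: "i \<noteq> j"
      have gen: "independent le (chain_to_seq n cs ! p) (chain_to_seq n cs ! q)"
        if "p < q" "q < n" for p q
      proof -
        have "le (cs!p + cs!Suc p) (cs!q)"
          using ap_trans[OF ap bi[of p] mono[of "Suc p" q]] that by simp
        moreover have "le (cs!p + cs!Suc p) (cs!Suc q)"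
          using ap_trans[OF ap bi[of p] mono[of "Suc p" "Suc q"]] that by simp
        ultimately have "le (cs!p + cs!Suc p) (cs!p + cs!Suc p + cs!q + cs!Suc q)"
          using ap_star2[OF ap] by blast
        then show ?thesis using nth that by (simp add: independent_def add.assoc)
      qed
      show "independent le (chain_to_seq n cs ! i) (chain_to_seq n cs ! j)"
      proof (cases "i < j")
        case True then show ?thesis using gen j by blast
      next
        case False then have "j < i" using ij by simp
        then have "independent le (chain_to_seq n cs ! j) (chain_to_seq n cs ! i)"
          using gen i by blast
        then show ?thesis using indep_sym[OF ap] by (simp add: independent_def)
      qed
    qed
  qed
  have R: "seq_to_chain a n bs \<in> chains_from le a n \<and> chain_to_seq n (seq_to_chain a n bs) = bs"
    if bs: "bs \<in> indep_seqs le a n" for bs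
  proof -
    have len: "length bs = n" and nz: "\<And>i. i<n \<Longrightarrow> bs!i \<noteq> 0"
      and ia: "\<And>i. i<n \<Longrightarrow> le a (a + bs!i)"
      and ib: "\<And>i j. i<n \<Longrightarrow> j<n \<Longrightarrow> i\<noteq>j \<Longrightarrow> le (bs!i) (bs!i + bs!j)"
      using bs by (auto simp: indep_seqs_def independent_def)
    have tk: "take (Suc i) bs = take i bs @ [bs!i]" if "i < n" for i
      using that len by (simp add: take_Suc_conv_app_nth)
    have key: "i \<le> j \<longrightarrow> le (bs!j) (bs!j + (a + sum_list (take i bs)))" if j: "j < n" for i j
    proof (induction i)
      case 0 show ?case using indep_sym[OF ap ia[OF j]] by simp
    next
      case (Suc i)
      show ?case
      proof
        assume "Suc i \<le> j"
        then have "le (bs!j) (bs!j + (a + sum_list (take i bs)))" "le (bs!j) (bs!j + bs!i)"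
          using Suc j ib[of j i] by auto
        then have "le (bs!j) (bs!j + ((a + sum_list (take i bs)) + bs!i))"
          using indep_sum[OF ap] by blast
        then show "le (bs!j) (bs!j + (a + sum_list (take (Suc i) bs)))"
          using tk[of i] \<open>Suc i \<le> j\<close> j by (simp add: add.assoc)
      qed
    qed
    have s: "seq_to_chain a n bs ! Suc i = seq_to_chain a n bs ! i + bs!i" if "i < n" for i
      using that s2c_nth[of i n a bs] s2c_nth[of "Suc i" n a bs] tk[OF that] by (simp add: add.assoc)
    have C: "seq_to_chain a n bs \<in> chains_from le a n"
      unfolding chains_from_def
    proof (intro CollectI conjI allI impI)
      show "length (seq_to_chain a n bs) = Suc n" by (simp add: seq_to_chain_def)
      show "seq_to_chain a n bs ! 0 = a" using s2c_nth[of 0 n] by simp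
      fix i assume i: "i < n"
      have "le (a + sum_list (take i bs)) (a + sum_list (take i bs) + bs!i)"
        using indep_sym[OF ap] key[OF i, of i] by blast
      then have "le (seq_to_chain a n bs ! i) (seq_to_chain a n bs ! Suc i)"
        using s[OF i] s2c_nth[of i n a bs] i by simp
      moreover have "seq_to_chain a n bs ! i \<noteq> seq_to_chain a n bs ! Suc i"
        using s[OF i] nz[OF i] by simp
      ultimately show "ap_less le (seq_to_chain a n bs ! i) (seq_to_chain a n bs ! Suc i)"
        by (simp add: ap_less_def)
    qed
    have "chain_to_seq n (seq_to_chain a n bs) = bs"
    proof (rule nth_equalityI)
      show "length (chain_to_seq n (seq_to_chain a n bs)) = length bs"
        using len by (simp add: chain_to_seq_def)
      fix i assume "i < length (chain_to_seq n (seq_to_chain a n bs))"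
      then have i: "i < n" by (simp add: chain_to_seq_def)
      have "chain_to_seq n (seq_to_chain a n bs) ! i
          = seq_to_chain a n bs ! i + (seq_to_chain a n bs ! i + bs!i)"
        using i s[OF i] by (simp add: chain_to_seq_def)
      also have "\<dots> = bs!i" using two0[OF ap, of "seq_to_chain a n bs ! i"]
        by (metis add.assoc add_0)
      finally show "chain_to_seq n (seq_to_chain a n bs) ! i = bs ! i" .
    qed
    with C show ?thesis by blast
  qed
  have "bij_betw (chain_to_seq n) (chains_from le a n) (indep_seqs le a n)"
    by (rule bij_betw_byWitness[where f'="seq_to_chain a n"]) (use L R F in auto)
  with L R show ?thesis by blast
qed

end
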